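(* Let $n\ge 4$, let $\emptyset\ne S\subseteq V$, and let $x=(i,j)$ and $y=(i',j')$ be distinct vertices of $K_n\times K_n$. Let $a_r=|L_r\cap S|$ for $r\in\{i,i'\}$ and $b_s=|L^s\cap S|$ for $s\in\{j,j'\}$. (1) If $x,y$ lie in the same horizontal layer (i.e. $j=j'$), then $\Delta_S(x,y)=a_i+a_{i'}+|\{x,y\}\cap S|$. (2) If $x,y$ lie in the same vertical layer (i.e. $i=i'$), then $\Delta_S(x,y)=b_j+b_{j'}+|\{x,y\}\cap S|$. (3) If $x,y$ lie in different layers (i.e. $i\ne i'$ and $j\ne j'$), and $z_1=(i',j)$, $z_2=(i,j')$, then $\Delta_S(x,y)=a_i+a_{i'}+b_j+b_{j'}-|\{x,y\}\cap S|-2|\{z_1,z_2\}\cap S|$.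
   Context: $K_n\times K_n$ is the direct product of two complete graphs on $n$ vertices: vertex set $V=[n]\times[n]$ with $[n]=\{1,\dots,n\}$, and $(i,j)$ adjacent to $(i',j')$ iff $i\ne i'$ and $j\ne j'$; $d$ denotes its graph distance. For $i,j\in[n]$, the vertical layer is $L_i=\{(i,j):j\in[n]\}$ and the horizontal layer is $L^j=\{(i,j):i\in[n]\}$. For vertices $x,y,z$ and $S\subseteq V$, $\Delta_z(x,y)=|d(x,z)-d(y,z)|$ and $\Delta_S(x,y)=\sum_{z\in S}\Delta_z(x,y)$. *)

theory Defs
  imports Main
begin

text \<open>The direct product K_n x K_n: vertex set [n] x [n] with [n] = {1..n}.\<close>

definition V :: "nat \<Rightarrow> (nat \<times> nat) set" where
  "V n = {1..n} \<times> {1..n}"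

definition adj :: "nat \<Rightarrow> nat \<times> nat \<Rightarrow> nat \<times> nat \<Rightarrow> bool" where
  "adj n u v \<longleftrightarrow> u \<in> V n \<and> v \<in> V n \<and> fst u \<noteq> fst v \<and> snd u \<noteq> snd v"

definition walk :: "nat \<Rightarrow> (nat \<times> nat) list \<Rightarrow> bool" where
  "walk n xs \<longleftrightarrow> xs \<noteq> [] \<and> set xs \<subseteq> V n \<and>
     (\<forall>k. Suc k < length xs \<longrightarrow> adj n (xs ! k) (xs ! Suc k))"

definition dist :: "nat \<Rightarrow> nat \<times> nat \<Rightarrow> nat \<times> nat \<Rightarrow> nat" where
  "dist n u v = (LEAST k. \<exists>xs. walk n xs \<and> hd xs = u \<and> last xs = v \<and> length xs = Suc k)"

definition vlayer :: "nat \<Rightarrow> nat \<Rightarrow> (nat \<times> nat) set" where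
  "vlayer n i = {(i, j) | j. j \<in> {1..n}}"

definition hlayer :: "nat \<Rightarrow> nat \<Rightarrow> (nat \<times> nat) set" where
  "hlayer n j = {(i, j) | i. i \<in> {1..n}}"

definition Delta :: "nat \<Rightarrow> nat \<times> nat \<Rightarrow> nat \<times> nat \<Rightarrow> nat \<times> nat \<Rightarrow> int" where
  "Delta n z x y = \<bar>int (dist n x z) - int (dist n y z)\<bar>"

definition DeltaS :: "nat \<Rightarrow> (nat \<times> nat) set \<Rightarrow> nat \<times> nat \<Rightarrow> nat \<times> nat \<Rightarrow> int" where
  "DeltaS n S x y = (\<Sum>z\<in>S. Delta n z x y)"

end

theory Submission
  imports Defs
begin

lemma third_elem:
  fixes n p q :: nat
  assumes "n \<ge> 3" shows "\<exists>b\<in>{1..n}. b \<noteq> p \<and> b \<noteq> q"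
proof -
  have "{1,2,3} \<subseteq> {1..n}" using assms by auto
  moreover have "\<exists>b\<in>{1,2,3::nat}. b \<noteq> p \<and> b \<noteq> q" by auto
  ultimately show ?thesis by blast
qed

lemma dist_eq:
  assumes n: "n \<ge> 3" and u: "u \<in> V n" and v: "v \<in> V n"
  shows "dist n u v = (if u = v then 0 else if fst u \<noteq> fst v \<and> snd u \<noteq> snd v then 1 else 2)"
proof -
  let ?P = "\<lambda>k. \<exists>xs. walk n xs \<and> hd xs = u \<and> last xs = v \<and> length xs = Suc k"
  show ?thesis
  proof (cases "u = v")
    case True
    have "?P 0" using u True by (intro exI[of _ "[u]"]) (auto simp: walk_def)
    then show ?thesis unfolding dist_def using True by (simp add: Least_eq_0)
  next
    case neq: False
    have not0: "\<not> ?P 0"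
    proof
      assume "?P 0"
      then obtain xs where "hd xs = u" "last xs = v" "length xs = 1" by auto
      then show False using neq by (cases xs) auto
    qed
    show ?thesis
    proof (cases "fst u \<noteq> fst v \<and> snd u \<noteq> snd v")
      case True
      have "?P 1" using u v True
        by (intro exI[of _ "[u,v]"]) (auto simp: walk_def adj_def less_Suc_eq)
      then have "(LEAST k. ?P k) = 1"
        by (intro Least_equality) (use not0 in \<open>auto simp: le_Suc_eq\<close>)
      then show ?thesis unfolding dist_def using True neq by simp
    next
      case False
      have not1: "\<not> ?P 1"
      proof
        assume "?P 1"
        then obtain xs where xs: "walk n xs" "hd xs = u" "last xs = v" "length xs = 2" by auto
        then obtain a b where "xs = [a,b]"
          by (cases xs; cases "tl xs") auto
        then have "adj n u v" using xs unfolding walk_def by auto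
        then show False using False by (simp add: adj_def)
      qed
      obtain a where a: "a \<in> {1..n}" "a \<noteq> fst u" "a \<noteq> fst v" using third_elem[OF n] by blast
      obtain b where b: "b \<in> {1..n}" "b \<noteq> snd u" "b \<noteq> snd v" using third_elem[OF n] by blast
      have "?P 2" using u v a b
        by (intro exI[of _ "[u,(a,b),v]"])
          (auto simp: walk_def adj_def V_def less_Suc_eq nth_Cons split: nat.splits)
      then have "(LEAST k. ?P k) = 2"
      proof (rule Least_equality)
        fix y assume "?P y"
        then show "2 \<le> y" using not0 not1
          by (cases y; cases "y - 1") (auto simp: numeral_2_eq_2)
      qed
      then show ?thesis unfolding dist_def using False neq by simp
    qed
  qed
qed

lemma vl: "z \<in> V n \<Longrightarrow> (z \<in> vlayer n i \<longleftrightarrow> fst z = i)"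
  by (cases z) (auto simp: vlayer_def V_def)
lemma hl: "z \<in> V n \<Longrightarrow> (z \<in> hlayer n j \<longleftrightarrow> snd z = j)"
  by (cases z) (auto simp: hlayer_def V_def)

lemma sum_ind: "finite S \<Longrightarrow> (\<Sum>z\<in>S. if z \<in> A then 1 else 0 :: int) = int (card (A \<inter> S))"
proof -
  assume f: "finite S"
  have "(\<Sum>z\<in>S. if z \<in> A then 1 else 0 :: int) = (\<Sum>z\<in>S \<inter> A. 1)"
    using sum.inter_restrict[OF f, of "\<lambda>_. 1::int" A] by simp
  also have "\<dots> = int (card (A \<inter> S))" by (simp add: Int_commute)
  finally show ?thesis .
qed

theorem mainTheorem2:
  fixes n i j i' j' :: nat and S :: "(nat \<times> nat) set"
  assumes "n \<ge> 4"
    and "S \<noteq> {}" and "S \<subseteq> V n"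
    and "(i, j) \<in> V n" and "(i', j') \<in> V n"
    and "(i, j) \<noteq> (i', j')"
  shows "(j = j' \<longrightarrow>
           DeltaS n S (i, j) (i', j') =
             int (card (vlayer n i \<inter> S)) + int (card (vlayer n i' \<inter> S))
             + int (card ({(i, j), (i', j')} \<inter> S)))
       \<and> (i = i' \<longrightarrow>
           DeltaS n S (i, j) (i', j') =
             int (card (hlayer n j \<inter> S)) + int (card (hlayer n j' \<inter> S))
             + int (card ({(i, j), (i', j')} \<inter> S)))
       \<and> (i \<noteq> i' \<and> j \<noteq> j' \<longrightarrow>
           DeltaS n S (i, j) (i', j') =
             int (card (vlayer n i \<inter> S)) + int (card (vlayer n i' \<inter> S))
             + int (card (hlayer n j \<inter> S)) + int (card (hlayer n j' \<inter> S))
             - int (card ({(i, j), (i', j')} \<inter> S))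
             - 2 * int (card ({(i', j), (i, j')} \<inter> S)))"
proof -
  have n3: "n \<ge> 3" using assms(1) by simp
  have fin: "finite S" using assms(3) finite_subset[of S "V n"] by (auto simp: V_def)
  let ?I = "\<lambda>A z. if z \<in> A then 1 else 0 :: int"
  have x: "(i,j) \<in> V n" and y: "(i',j') \<in> V n" using assms by auto
  have D: "Delta n z (i,j) (i',j') = \<bar>int (if (i,j) = z then 0 else if i \<noteq> fst z \<and> j \<noteq> snd z then 1 else 2)
      - int (if (i',j') = z then 0 else if i' \<noteq> fst z \<and> j' \<noteq> snd z then 1 else 2)\<bar>"
    if "z \<in> V n" for z
    unfolding Delta_def using dist_eq[OF n3 x that] dist_eq[OF n3 y that] by simp
  show ?thesis
  proof (intro conjI impI)
    assume jj: "j = j'"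
    have "DeltaS n S (i, j) (i', j') = (\<Sum>z\<in>S. ?I (vlayer n i) z + ?I (vlayer n i') z + ?I {(i, j), (i', j')} z)"
      unfolding DeltaS_def
    proof (rule sum.cong[OF refl])
      fix z assume "z \<in> S"
      then have zV: "z \<in> V n" using assms(3) by auto
      show "Delta n z (i, j) (i', j') = ?I (vlayer n i) z + ?I (vlayer n i') z + ?I {(i, j), (i', j')} z"
        using D[OF zV] vl[OF zV] jj assms(6) by (cases z) auto
    qed
    then show "DeltaS n S (i, j) (i', j') =
             int (card (vlayer n i \<inter> S)) + int (card (vlayer n i' \<inter> S))
             + int (card ({(i, j), (i', j')} \<inter> S))"
      by (simp only: sum.distrib sum_ind[OF fin])
  next
    assume ii: "i = i'"
    have "DeltaS n S (i, j) (i', j') = (\<Sum>z\<in>S. ?I (hlayer n j) z + ?I (hlayer n j') z + ?I {(i, j), (i', j')} z)"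
      unfolding DeltaS_def
    proof (rule sum.cong[OF refl])
      fix z assume "z \<in> S"
      then have zV: "z \<in> V n" using assms(3) by auto
      show "Delta n z (i, j) (i', j') = ?I (hlayer n j) z + ?I (hlayer n j') z + ?I {(i, j), (i', j')} z"
        using D[OF zV] hl[OF zV] ii assms(6) by (cases z) auto
    qed
    then show "DeltaS n S (i, j) (i', j') =
             int (card (hlayer n j \<inter> S)) + int (card (hlayer n j' \<inter> S))
             + int (card ({(i, j), (i', j')} \<inter> S))"
      by (simp only: sum.distrib sum_ind[OF fin])
  next
    assume d: "i \<noteq> i' \<and> j \<noteq> j'"
    have "DeltaS n S (i, j) (i', j') = (\<Sum>z\<in>S. ?I (vlayer n i) z + ?I (vlayer n i') z
        + ?I (hlayer n j) z + ?I (hlayer n j') z - ?I {(i, j), (i', j')} z - 2 * ?I {(i', j), (i, j')} z)"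
      unfolding DeltaS_def
    proof (rule sum.cong[OF refl])
      fix z assume "z \<in> S"
      then have zV: "z \<in> V n" using assms(3) by auto
      show "Delta n z (i, j) (i', j') = ?I (vlayer n i) z + ?I (vlayer n i') z
        + ?I (hlayer n j) z + ?I (hlayer n j') z - ?I {(i, j), (i', j')} z - 2 * ?I {(i', j), (i, j')} z"
        using D[OF zV] vl[OF zV] hl[OF zV] d by (cases z) auto
    qed
    then show "DeltaS n S (i, j) (i', j') =
             int (card (vlayer n i \<inter> S)) + int (card (vlayer n i' \<inter> S))
             + int (card (hlayer n j \<inter> S)) + int (card (hlayer n j' \<inter> S))
             - int (card ({(i, j), (i', j')} \<inter> S))
             - 2 * int (card ({(i', j), (i, j')} \<inter> S))"
      by (simp only: sum.distrib sum_subtractf sum_distrib_left[symmetric] sum_ind[OF fin])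
  qed
qed

end
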